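(* Let $n\in\{2,4,8\}$ and $V_0=\{v\in\{-1,1\}^n : v_1=1,\ \sum_i v_i=0\}$. Then there exist signs $\varepsilon_v\in\{-1,1\}$, $v\in V_0$, and a vector $w\in\mathbb{Z}^n$ with $w_i\ge -1$ for all $i$, such that $\sum_{v\in V_0}\varepsilon_v v=w$. *)

theory Defs
  imports Main
begin

text \<open>Vectors in {-1,1}^n are represented as functions nat => int, with coordinates
  indexed 1..n and value 0 outside {1..n} (so that the set is finite).\<close>

definition V0 :: "nat \<Rightarrow> (nat \<Rightarrow> int) set" where
  "V0 n = {v. (\<forall>i\<in>{1..n}. v i = -1 \<or> v i = 1) \<and> (\<forall>i. i \<notin> {1..n} \<longrightarrow> v i = 0)
              \<and> v 1 = 1 \<and> (\<Sum>i\<in>{1..n}. v i) = 0}"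

end

theory Submission
  imports Defs
begin

definition NEG :: "int list list" where
  "NEG = [[1, -1, -1, -1, -1, 1, 1, 1], [1, -1, -1, -1, 1, 1, 1, -1], [1, -1, -1, 1, -1, 1, 1, -1],
   [1, -1, -1, 1, 1, -1, -1, 1], [1, -1, -1, 1, 1, -1, 1, -1], [1, -1, 1, -1, -1, 1, -1, 1],
   [1, -1, 1, -1, 1, -1, -1, 1], [1, -1, 1, -1, 1, -1, 1, -1], [1, -1, 1, 1, -1, -1, -1, 1],
   [1, -1, 1, 1, -1, 1, -1, -1], [1, -1, 1, 1, 1, -1, -1, -1], [1, 1, -1, -1, -1, -1, 1, 1],
   [1, 1, -1, -1, -1, 1, -1, 1], [1, 1, -1, -1, 1, -1, 1, -1], [1, 1, -1, -1, 1, 1, -1, -1],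
   [1, 1, -1, 1, -1, -1, -1, 1], [1, 1, 1, -1, -1, -1, 1, -1], [1, 1, 1, 1, -1, -1, -1, -1]]"

definition L :: "nat \<Rightarrow> int list set" where
  "L n = set (filter (\<lambda>xs. xs ! 0 = 1 \<and> sum_list xs = 0) (List.n_lists n [-1, 1]))"

lemma nth_mv: "i \<in> {1..n} \<Longrightarrow> map v [1..<n+1] ! (i-1) = v i"
  by (subst nth_map_upt) auto

lemma bij_V0:
  assumes "n \<ge> 1"
  shows "bij_betw (\<lambda>v. map v [1..<n+1]) (V0 n) (L n)"
proof (rule bij_betw_imageI)
  show "inj_on (\<lambda>v. map v [1..<n+1]) (V0 n)"
  proof
    fix u v assume u: "u \<in> V0 n" and v: "v \<in> V0 n" and e: "map u [1..<n+1] = map v [1..<n+1]"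
    show "u = v"
    proof
      fix i
      show "u i = v i"
      proof (cases "i \<in> {1..n}")
        case True
        then have "u i = map u [1..<n+1] ! (i-1)" "v i = map v [1..<n+1] ! (i-1)"
          by (simp_all only: nth_mv)
        then show ?thesis using e by metis
      next
        case False then show ?thesis using u v by (simp add: V0_def)
      qed
    qed
  qed
  show "(\<lambda>v. map v [1..<n+1]) ` V0 n = L n"
  proof
    show "(\<lambda>v. map v [1..<n+1]) ` V0 n \<subseteq> L n"
    proof
      fix xs assume "xs \<in> (\<lambda>v. map v [1..<n+1]) ` V0 n"
      then obtain v where v: "v \<in> V0 n" and xs: "xs = map v [1..<n+1]" by auto
      have s: "sum_list xs = (\<Sum>i\<in>{1..n}. v i)"
        unfolding xs interv_sum_list_conv_sum_set_nat
        by (metis Suc_eq_plus1 atLeastLessThanSuc_atLeastAtMost set_upt)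
      have h: "xs ! 0 = v 1" using nth_mv[of 1 n v] assms xs by simp
      have "set xs \<subseteq> {-1, 1}" using v xs by (auto simp: V0_def)
      then show "xs \<in> L n" using v s h xs by (auto simp: L_def set_n_lists V0_def)
    qed
    show "L n \<subseteq> (\<lambda>v. map v [1..<n+1]) ` V0 n"
    proof
      fix xs assume "xs \<in> L n"
      then have len: "length xs = n" and st: "set xs \<subseteq> {-1,1}" and x0: "xs ! 0 = 1"
        and sl: "sum_list xs = 0" by (auto simp: L_def set_n_lists)
      define v where "v = (\<lambda>i. if i \<in> {1..n} then xs ! (i - 1) else 0)"
      have m: "map v [1..<n+1] = xs"
        by (rule nth_equalityI) (auto simp del: upt_Suc simp: len v_def nth_map_upt)
      have "v \<in> V0 n"
      proof -
        have a: "\<forall>i\<in>{1..n}. v i = -1 \<or> v i = 1"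
        proof
          fix i assume i: "i \<in> {1..n}"
          then have "xs ! (i-1) \<in> set xs" using len by auto
          then show "v i = -1 \<or> v i = 1" using st i by (auto simp: v_def)
        qed
        have b: "v 1 = 1" using assms x0 by (simp add: v_def)
        have "(\<Sum>i\<in>{1..n}. v i) = sum_list (map v [1..<n+1])"
          unfolding interv_sum_list_conv_sum_set_nat
          by (metis Suc_eq_plus1 atLeastLessThanSuc_atLeastAtMost set_upt)
        then have c: "(\<Sum>i\<in>{1..n}. v i) = 0" using m sl by simp
        show ?thesis using a b c by (simp add: V0_def v_def)
      qed
      then show "xs \<in> (\<lambda>v. map v [1..<n+1]) ` V0 n" using m by force
    qed
  qed
qed

lemma sum_V0:
  assumes "n \<ge> 1"
  shows "(\<Sum>v\<in>V0 n. F (map v [1..<n+1])) = (\<Sum>xs\<in>L n. F xs)"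
  using sum.reindex_bij_betw[OF bij_V0[OF assms], of F] by simp

definition eps :: "nat \<Rightarrow> (nat \<Rightarrow> int) \<Rightarrow> int" where
  "eps n v = (if map v [1..<n+1] \<in> set NEG then -1 else 1)"

lemma main_sum:
  assumes "n \<ge> 1" "i \<in> {1..n}"
  shows "(\<Sum>v\<in>V0 n. eps n v * v i) =
    sum_list (map (\<lambda>xs. (if xs \<in> set NEG then -1 else 1) * xs ! (i-1))
      (remdups (filter (\<lambda>xs. xs ! 0 = 1 \<and> sum_list xs = 0) (List.n_lists n [-1, 1]))))"
proof -
  have "(\<Sum>v\<in>V0 n. eps n v * v i) = (\<Sum>v\<in>V0 n.
     (\<lambda>xs. (if xs \<in> set NEG then -1 else 1) * xs ! (i-1)) (map v [1..<n+1]))"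
    using assms by (intro sum.cong) (simp_all only: eps_def nth_mv)
  also have "\<dots> = (\<Sum>xs\<in>L n. (if xs \<in> set NEG then -1 else 1) * xs ! (i-1))"
    by (rule sum_V0[OF assms(1)])
  finally show ?thesis unfolding L_def sum_code .
qed

theorem lemmaA2:
  fixes n :: nat
  assumes "n \<in> {2, 4, 8}"
  shows "\<exists>\<epsilon> :: (nat \<Rightarrow> int) \<Rightarrow> int. (\<forall>v\<in>V0 n. \<epsilon> v = -1 \<or> \<epsilon> v = 1) \<and>
           (\<exists>w :: nat \<Rightarrow> int. (\<forall>i\<in>{1..n}. w i \<ge> -1) \<and>
              (\<forall>i\<in>{1..n}. (\<Sum>v\<in>V0 n. \<epsilon> v * v i) = w i))"
proof -
  have n1: "n \<ge> 1" using assms by auto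
  have comp: "list_all (\<lambda>n. list_all (\<lambda>j. -1 \<le> sum_list (map (\<lambda>xs. (if xs \<in> set NEG then -1 else 1) * xs ! j)
      (remdups (filter (\<lambda>xs. xs ! 0 = 1 \<and> sum_list xs = (0::int)) (List.n_lists n [-1, 1]))))) [0..<n]) [2,4,8]"
    by code_simp
  have key: "\<forall>i\<in>{1..n}. (\<Sum>v\<in>V0 n. eps n v * v i) \<ge> -1"
  proof
    fix i assume i: "i \<in> {1..n}"
    have "i - 1 < n" using i by auto
    then have "-1 \<le> sum_list (map (\<lambda>xs. (if xs \<in> set NEG then -1 else 1) * xs ! (i-1))
      (remdups (filter (\<lambda>xs. xs ! 0 = 1 \<and> sum_list xs = 0) (List.n_lists n [-1, 1]))))"
      using comp assms unfolding list_all_iff by auto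
    then show "(\<Sum>v\<in>V0 n. eps n v * v i) \<ge> -1" using main_sum[OF n1 i] by simp
  qed
  have e: "\<forall>v\<in>V0 n. eps n v = -1 \<or> eps n v = 1" by (simp add: eps_def)
  show ?thesis
    by (rule exI[of _ "eps n"], intro conjI[OF e])
       (rule exI[of _ "\<lambda>i. \<Sum>v\<in>V0 n. eps n v * v i"], simp add: key)
qed

end
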